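(* Let $\Omega\subset\mathbb{R}^d$ be a bounded open set with $\partial\Omega\in C^{1,1}$, and let $\delta:\mathbb{R}^d\to[0,\infty)$ with $\delta\in W^{1,\infty}(\Omega)$ satisfy $c\,\delta\le d_\Omega\le C\,\delta$ for some constants $c,C>0$. Then $\delta^s\in H^s(\mathbb{R}^d)$ for all $s\in(0,1)$.
   Context: $d_\Omega(x)=\mathrm{dist}(x,\mathbb{R}^d\setminus\Omega)$ (so the comparability forces $\delta=0$ outside $\Omega$). $W^{1,\infty}(\Omega)$ denotes Lipschitz functions on $\overline\Omega$. $H^s(\mathbb{R}^d)=\{w\in L^2(\mathbb{R}^d):\iint_{\mathbb{R}^d\times\mathbb{R}^d}\frac{|w(x)-w(y)|^2}{|x-y|^{d+2s}}dx\,dy<\infty\}$. *)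

theory Defs
  imports "HOL-Analysis.Analysis"
begin

definition dist_compl :: "'a::euclidean_space set \<Rightarrow> 'a \<Rightarrow> real" where
  "dist_compl \<Omega> x = infdist x (- \<Omega>)"

text \<open>C^{1,1} boundary: near every boundary point x0, after choosing a unit
  normal direction nu (a rotation of coordinates), Omega is the strict
  supergraph over the hyperplane orthogonal to nu of a C^1 function gamma with
  Lipschitz gradient. gamma is taken on the whole space and evaluated at the
  orthogonal projection onto the hyperplane.\<close>
definition C11_boundary :: "'a::euclidean_space set \<Rightarrow> bool" where
  "C11_boundary \<Omega> \<longleftrightarrow>
    (\<forall>x0\<in>frontier \<Omega>. \<exists>r>0. \<exists>\<nu>::'a. \<exists>\<gamma>::'a \<Rightarrow> real. \<exists>g::'a \<Rightarrow> 'a. \<exists>L::real.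
       norm \<nu> = 1 \<and>
       (\<forall>y. (\<gamma> has_derivative (\<lambda>h. g y \<bullet> h)) (at y)) \<and>
       (\<forall>y z. dist (g y) (g z) \<le> L * dist y z) \<and>
       \<Omega> \<inter> ball x0 r = {x \<in> ball x0 r. x \<bullet> \<nu> > \<gamma> (x - (x \<bullet> \<nu>) *\<^sub>R \<nu>)})"

definition Hs :: "real \<Rightarrow> ('a::euclidean_space \<Rightarrow> real) set" where
  "Hs s = {w. w \<in> borel_measurable lborel \<and>
              integrable lborel (\<lambda>x. (w x)\<^sup>2) \<and>
              (\<integral>\<^sup>+ z. ennreal ((w (fst z) - w (snd z))\<^sup>2 /
                   norm (fst z - snd z) powr (real DIM('a) + 2 * s))
                 \<partial>(lborel \<Otimes>\<^sub>M lborel)) < \<infinity>}"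

end

theory Submission
  imports Defs
begin

lemma dyadic_ex:
  fixes t :: real assumes "t \<ge> 1"
  shows "\<exists>n::nat. 2^n \<le> t \<and> t < 2^(Suc n)"
proof -
  obtain N :: nat where "t < 2^N" using real_arch_pow[of 2 t] by auto
  then show ?thesis
  proof (induction N)
    case 0 then show ?case using assms by simp
  next
    case (Suc N)
    show ?case
    proof (cases "t < 2^N")
      case True then show ?thesis using Suc.IH by blast
    next
      case False then show ?thesis using Suc.prems by (auto simp: not_less)
    qed
  qed
qed

lemma emeasure_cball_le:
  fixes x :: "'a::euclidean_space" assumes "\<rho> \<ge> 0"
  shows "emeasure lborel (cball x \<rho>) \<le> ennreal ((2*\<rho>) ^ DIM('a))"
proof -
  have sub: "cball x \<rho> \<subseteq> cbox (x - \<rho> *\<^sub>R One) (x + \<rho> *\<^sub>R One)"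
  proof
    fix y assume "y \<in> cball x \<rho>"
    then have "norm (x - y) \<le> \<rho>" by (simp add: dist_norm)
    then have "\<bar>(x - y) \<bullet> b\<bar> \<le> \<rho>" if "b \<in> Basis" for b
      using Basis_le_norm[OF that, of "x - y"] by linarith
    then show "y \<in> cbox (x - \<rho> *\<^sub>R One) (x + \<rho> *\<^sub>R One)"
      by (auto simp: mem_box algebra_simps inner_diff_left abs_le_iff)
  qed
  have "emeasure lborel (cball x \<rho>) \<le> emeasure lborel (cbox (x - \<rho> *\<^sub>R One) (x + \<rho> *\<^sub>R One))"
    by (rule emeasure_mono[OF sub]) simp
  also have "\<dots> = ennreal ((2*\<rho>) ^ DIM('a))"
    using assms by (simp add: emeasure_lborel_cbox_eq inner_diff_left inner_add_left algebra_simps)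
  finally show ?thesis .
qed

lemma alg_small:
  fixes r A e g :: real and d n :: nat
  assumes "r > 0" "e = 2 + real d - g"
  shows "A * (r / 2^n)^2 / ((r/2^n)/2) powr g * (2 * (r/2^n))^d
       = A * 2 powr g * 2^d * r powr e * (1 / 2 powr e)^n"
proof -
  define t where "t = r / 2^n"
  have t: "t > 0" using assms by (simp add: t_def)
  have "A * t^2 / (t/2) powr g * (2*t)^d = A * 2 powr g * 2^d * (t powr 2 * t powr real d / t powr g)"
    using t by (simp add: powr_divide power_mult_distrib powr_realpow field_simps)
  also have "t powr 2 * t powr real d / t powr g = t powr e"
    using t assms by (simp add: powr_add powr_diff)
  also have "t powr e = r powr e * (1 / 2 powr e)^n"
    using assms by (simp add: t_def powr_divide powr_realpow[symmetric] powr_powr field_simps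
        flip: powr_power)
  finally show ?thesis by (simp add: t_def)
qed

lemma ennreal_le_suminf: "(f::nat \<Rightarrow> ennreal) n \<le> suminf f"
  using sum_le_suminf[OF summableI, of "{n}" f] by simp

lemma small_int:
  fixes x :: "'a::euclidean_space" and s r A :: real
  assumes s: "0 < s" "s < 1" and r: "r > 0" and A: "A \<ge> 0"
  defines "g \<equiv> real DIM('a) + 2 * s"
  defines "q \<equiv> 1 / 2 powr (2 - 2 * s)"
  shows "(\<integral>\<^sup>+ y. ennreal (if dist x y < r then A * (norm (x - y)^2 / norm (x - y) powr g) else 0) \<partial>lborel)
     \<le> ennreal (A * (2 powr g * 2^DIM('a) / (1 - q)) * r powr (2 - 2 * s))"
proof -
  define e where "e = 2 - 2 * s"
  have e: "e > 0" "e = 2 + real DIM('a) - g" using s by (auto simp: e_def g_def)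
  have q: "0 < q" "q < 1" using e by (auto simp: q_def e_def[symmetric])
  define t where "t n = r / 2^n" for n :: nat
  have t: "t n > 0" for n using r by (simp add: t_def)
  define c where "c n = A * (t n)^2 / (t n / 2) powr g" for n
  have c: "c n \<ge> 0" for n using A t by (simp add: c_def)
  define G where "G n y = ennreal (c n) * indicator (cball x (t n)) y" for n y
  have pt: "ennreal (if dist x y < r then A * (norm (x - y)^2 / norm (x - y) powr g) else 0) \<le> (\<Sum>n. G n y)" for y
  proof (cases "dist x y < r \<and> y \<noteq> x")
    case True
    define \<rho> where "\<rho> = norm (x - y)"
    have \<rho>: "\<rho> > 0" "\<rho> < r" using True by (auto simp: \<rho>_def dist_norm)
    obtain n where n: "2^n \<le> r / \<rho>" "r / \<rho> < 2^Suc n"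
      using dyadic_ex[of "r/\<rho>"] \<rho> by auto
    have le: "\<rho> \<le> t n" using n \<rho> by (simp add: t_def field_simps)
    have gt: "t n / 2 < \<rho>" using n \<rho> by (simp add: t_def field_simps)
    have "A * (\<rho>^2 / \<rho> powr g) \<le> c n"
    proof -
      have "\<rho>^2 / \<rho> powr g \<le> (t n)^2 / (t n / 2) powr g"
        apply (rule frac_le)
        using \<rho> le t[of n] gt g_def s by (auto intro!: power_mono powr_mono2)
      then show ?thesis using A mult_left_mono[OF _ A] by (simp add: c_def times_divide_eq_right[symmetric] del: times_divide_eq_right)
    qed
    then have "ennreal (A * (\<rho>^2 / \<rho> powr g)) \<le> G n y"
      using le by (simp add: G_def \<rho>_def dist_norm indicator_def ennreal_leI)
    also have "\<dots> \<le> (\<Sum>n. G n y)" by (rule ennreal_le_suminf)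
    finally show ?thesis using True by (simp add: \<rho>_def)
  next
    case False
    then show ?thesis by auto
  qed
  have "(\<integral>\<^sup>+ y. ennreal (if dist x y < r then A * (norm (x - y)^2 / norm (x - y) powr g) else 0) \<partial>lborel)
      \<le> (\<integral>\<^sup>+ y. (\<Sum>n. G n y) \<partial>lborel)"
    by (rule nn_integral_mono) (rule pt)
  also have "\<dots> = (\<Sum>n. \<integral>\<^sup>+ y. G n y \<partial>lborel)"
    by (rule nn_integral_suminf) (auto simp: G_def intro!: borel_measurable_times_ennreal borel_measurable_indicator)
  also have "\<dots> = (\<Sum>n. ennreal (c n) * emeasure lborel (cball x (t n)))"
    by (simp add: G_def nn_integral_cmult_indicator)
  also have "\<dots> \<le> (\<Sum>n. ennreal (c n * (2 * t n)^DIM('a)))"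
  proof (rule suminf_le)
    fix n
    have "ennreal (c n) * emeasure lborel (cball x (t n)) \<le> ennreal (c n) * ennreal ((2 * t n)^DIM('a))"
      by (rule mult_left_mono[OF emeasure_cball_le]) (use t[of n] in auto)
    then show "ennreal (c n) * emeasure lborel (cball x (t n)) \<le> ennreal (c n * (2 * t n)^DIM('a))"
      using c[of n] t[of n] by (simp add: ennreal_mult[symmetric])
  qed auto
  also have "\<dots> = (\<Sum>n. ennreal (A * 2 powr g * 2^DIM('a) * r powr e * q^n))"
    using alg_small[OF r e(2), of A] by (simp add: c_def t_def q_def e_def)
  also have "\<dots> = ennreal (\<Sum>n. A * 2 powr g * 2^DIM('a) * r powr e * q^n)"
    using q A by (intro suminf_ennreal2) (auto intro!: summable_mult summable_geometric)
  also have "(\<Sum>n. A * 2 powr g * 2^DIM('a) * r powr e * q^n) = A * 2 powr g * 2^DIM('a) * r powr e / (1 - q)"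
    using q by (simp add: suminf_mult suminf_geometric summable_geometric)
  finally show ?thesis by (simp add: e_def field_simps)
qed


lemma alg_large:
  fixes r A e g :: real and d n :: nat
  assumes "r > 0" "e = g - real d"
  shows "A / (r * 2^n) powr g * (2 * (2 * (r * 2^n)))^d
       = A * 4^d * r powr (- e) * (1 / 2 powr e)^n"
proof -
  define t where "t = r * 2^n"
  have t: "t > 0" using assms by (simp add: t_def)
  have "A / t powr g * (2 * (2 * t))^d = A * 4^d * (t powr real d / t powr g)"
    using t by (simp add: power_mult_distrib powr_realpow field_simps)
  also have "t powr real d / t powr g = t powr (- e)"
  proof -
    have "t powr g = t powr e * t powr real d" using assms by (simp add: powr_add[symmetric])
    then show ?thesis using t by (simp add: powr_minus field_simps)
  qed
  also have "t powr (- e) = r powr (- e) * (1 / 2 powr e)^n"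
    using assms by (simp add: t_def powr_mult powr_realpow[symmetric] powr_powr powr_minus field_simps
        flip: powr_power)
  finally show ?thesis by (simp add: t_def)
qed

lemma large_int:
  fixes x :: "'a::euclidean_space" and s r A :: real
  assumes s: "0 < s" "s < 1" and r: "r > 0" and A: "A \<ge> 0"
  defines "g \<equiv> real DIM('a) + 2 * s"
  defines "q \<equiv> 1 / 2 powr (2 * s)"
  shows "(\<integral>\<^sup>+ y. ennreal (if r \<le> dist x y then A / norm (x - y) powr g else 0) \<partial>lborel)
     \<le> ennreal (A * (4^DIM('a) / (1 - q)) * r powr (- (2 * s)))"
proof -
  define e where "e = 2 * s"
  have e: "e > 0" "e = g - real DIM('a)" using s by (auto simp: e_def g_def)
  have q: "0 < q" "q < 1" using e by (auto simp: q_def e_def[symmetric])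
  define t where "t n = r * 2^n" for n :: nat
  have t: "t n > 0" for n using r by (simp add: t_def)
  define c where "c n = A / (t n) powr g" for n
  have c: "c n \<ge> 0" for n using A t by (simp add: c_def)
  define G where "G n y = ennreal (c n) * indicator (cball x (2 * t n)) y" for n y
  have pt: "ennreal (if r \<le> dist x y then A / norm (x - y) powr g else 0) \<le> (\<Sum>n. G n y)" for y
  proof (cases "r \<le> dist x y")
    case True
    define \<rho> where "\<rho> = norm (x - y)"
    have \<rho>: "\<rho> > 0" "r \<le> \<rho>" using True r by (auto simp: \<rho>_def dist_norm)
    obtain n where n: "2^n \<le> \<rho> / r" "\<rho> / r < 2^Suc n"
      using dyadic_ex[of "\<rho>/r"] \<rho> r by auto
    have le: "t n \<le> \<rho>" using n \<rho> r by (simp add: t_def field_simps)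
    have lt: "\<rho> < 2 * t n" using n \<rho> r by (simp add: t_def field_simps)
    have "A / \<rho> powr g \<le> c n"
      unfolding c_def
      apply (rule divide_left_mono)
      using \<rho> le t[of n] g_def s A by (auto intro!: powr_mono2 mult_pos_pos)
    then have "ennreal (A / \<rho> powr g) \<le> G n y"
      using lt by (simp add: G_def \<rho>_def dist_norm indicator_def ennreal_leI)
    also have "\<dots> \<le> (\<Sum>n. G n y)" by (rule ennreal_le_suminf)
    finally show ?thesis using True by (simp add: \<rho>_def)
  next
    case False
    then show ?thesis by auto
  qed
  have "(\<integral>\<^sup>+ y. ennreal (if r \<le> dist x y then A / norm (x - y) powr g else 0) \<partial>lborel)
      \<le> (\<integral>\<^sup>+ y. (\<Sum>n. G n y) \<partial>lborel)"
    by (rule nn_integral_mono) (rule pt)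
  also have "\<dots> = (\<Sum>n. \<integral>\<^sup>+ y. G n y \<partial>lborel)"
    by (rule nn_integral_suminf) (auto simp: G_def intro!: borel_measurable_times_ennreal borel_measurable_indicator)
  also have "\<dots> = (\<Sum>n. ennreal (c n) * emeasure lborel (cball x (2 * t n)))"
    by (simp add: G_def nn_integral_cmult_indicator)
  also have "\<dots> \<le> (\<Sum>n. ennreal (c n * (2 * (2 * t n))^DIM('a)))"
  proof (rule suminf_le)
    fix n
    have "ennreal (c n) * emeasure lborel (cball x (2 * t n)) \<le> ennreal (c n) * ennreal ((2 * (2 * t n))^DIM('a))"
      by (rule mult_left_mono[OF emeasure_cball_le]) (use t[of n] in auto)
    then show "ennreal (c n) * emeasure lborel (cball x (2 * t n)) \<le> ennreal (c n * (2 * (2 * t n))^DIM('a))"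
      using c[of n] t[of n] by (simp add: ennreal_mult[symmetric])
  qed auto
  also have "\<dots> = (\<Sum>n. ennreal (A * 4^DIM('a) * r powr (- e) * q^n))"
    using alg_large[OF r e(2), of A] by (simp add: c_def t_def q_def e_def)
  also have "\<dots> = ennreal (\<Sum>n. A * 4^DIM('a) * r powr (- e) * q^n)"
    using q A by (intro suminf_ennreal2) (auto intro!: summable_mult summable_geometric)
  also have "(\<Sum>n. A * 4^DIM('a) * r powr (- e) * q^n) = A * 4^DIM('a) * r powr (- e) / (1 - q)"
    using q by (simp add: suminf_mult suminf_geometric summable_geometric)
  finally show ?thesis by (simp add: e_def field_simps)
qed

lemma powr_diff_abs_le:
  fixes a b m s :: real
  assumes "0 < m" "m \<le> a" "m \<le> b" "0 < s" "s < 1"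
  shows "\<bar>a powr s - b powr s\<bar> \<le> \<bar>a - b\<bar> * m powr (s - 1)"
proof -
  have main: "x powr s - y powr s \<le> (x - y) * m powr (s - 1)" if "m \<le> y" "y \<le> x" for x y
  proof -
    have pos: "0 < y" "0 < x" using that assms by auto
    have "x powr s = x * x powr (s - 1)" using pos by (simp add: powr_diff)
    also have "\<dots> \<le> x * y powr (s - 1)"
      using pos that assms by (intro mult_left_mono powr_mono2') auto
    finally have 1: "x powr s - y powr s \<le> (x - y) * y powr (s - 1)"
      using pos by (simp add: powr_diff field_simps)
    have "y powr (s - 1) \<le> m powr (s - 1)"
      using pos that assms by (intro powr_mono2') auto
    then have "(x - y) * y powr (s - 1) \<le> (x - y) * m powr (s - 1)"
      using that by (intro mult_left_mono) auto
    with 1 show ?thesis by linarith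
  qed
  show ?thesis
  proof (cases "b \<le> a")
    case True
    have "0 \<le> a powr s - b powr s" using True assms by (simp add: powr_mono2)
    then show ?thesis using main[OF assms(3) True] True by simp
  next
    case False
    have "0 \<le> b powr s - a powr s" using False assms by (simp add: powr_mono2)
    then show ?thesis using main[OF assms(2), of b] False by simp
  qed
qed
theorem lemma2p1:
  fixes \<Omega> :: "'a::euclidean_space set" and \<delta> :: "'a \<Rightarrow> real" and c C :: real
  assumes "open \<Omega>" and "bounded \<Omega>" and "C11_boundary \<Omega>"
    and "\<forall>x. \<delta> x \<ge> 0"
    and "\<exists>L. \<forall>x\<in>closure \<Omega>. \<forall>y\<in>closure \<Omega>. \<bar>\<delta> x - \<delta> y\<bar> \<le> L * dist x y"
    and "c > 0" and "C > 0"
    and "\<forall>x. c * \<delta> x \<le> dist_compl \<Omega> x \<and> dist_compl \<Omega> x \<le> C * \<delta> x"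
  shows "\<forall>s. 0 < s \<and> s < 1 \<longrightarrow> (\<lambda>x. \<delta> x powr s) \<in> Hs s"
proof (intro allI impI)
  fix s :: real assume "0 < s \<and> s < 1"
  then have s: "0 < s" "s < 1" by auto
  note opn = assms(1) and bdd = assms(2) and nn = assms(4) and cpos = assms(6) and Cpos = assms(7)
  define D where "D x = infdist x (- \<Omega>)" for x
  have cmp: "c * \<delta> x \<le> D x" "D x \<le> C * \<delta> x" for x
    using assms(8) by (auto simp: D_def dist_compl_def)
  have up: "\<delta> x \<le> D x / c" for x using cmp(1)[of x] cpos by (simp add: field_simps)
  have lo: "D x / C \<le> \<delta> x" for x using cmp(2)[of x] Cpos by (simp add: field_simps)
  have Dtri: "D y \<le> D x + dist y x" for x y unfolding D_def by (rule infdist_triangle)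
  have Dout: "x \<notin> \<Omega> \<Longrightarrow> D x = 0" for x by (simp add: D_def infdist_zero)
  have out: "x \<notin> \<Omega> \<Longrightarrow> \<delta> x = 0" for x
    using up[of x] nn Dout[of x] cpos by (metis div_0 order_antisym)
  have nonempty: "- \<Omega> \<noteq> {}"
  proof
    assume "- \<Omega> = {}"
    then have "\<Omega> = UNIV" by auto
    with bdd show False using not_bounded_UNIV by metis
  qed
  then obtain p where p: "p \<notin> \<Omega>" by auto
  have Dpos: "x \<in> \<Omega> \<Longrightarrow> D x > 0" for x
    unfolding D_def using opn nonempty by (intro infdist_pos_not_in_closed) auto
  have Din: "D y > 0 \<Longrightarrow> y \<in> \<Omega>" for y using Dout by force
  obtain L where L: "\<forall>x\<in>closure \<Omega>. \<forall>y\<in>closure \<Omega>. \<bar>\<delta> x - \<delta> y\<bar> \<le> L * dist x y"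
    using assms(5) by blast
  define L0 where "L0 = max L 0"
  have L0: "L0 \<ge> 0" "x \<in> \<Omega> \<Longrightarrow> y \<in> \<Omega> \<Longrightarrow> \<bar>\<delta> x - \<delta> y\<bar> \<le> L0 * dist x y" for x y
  proof -
    show "L0 \<ge> 0" by (simp add: L0_def)
    assume "x \<in> \<Omega>" "y \<in> \<Omega>"
    then have "\<bar>\<delta> x - \<delta> y\<bar> \<le> L * dist x y" using L closure_subset by blast
    also have "\<dots> \<le> L0 * dist x y" by (simp add: L0_def mult_right_mono)
    finally show "\<bar>\<delta> x - \<delta> y\<bar> \<le> L0 * dist x y" .
  qed
  define M where "M = max L0 (1 / c)"
  have glob: "\<bar>\<delta> x - \<delta> y\<bar> \<le> M * dist x y" for x y
  proof -
    have half: "\<bar>\<delta> x - \<delta> y\<bar> \<le> M * dist x y" if "x \<notin> \<Omega>" for x y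
    proof -
      have "\<delta> y \<le> D y / c" by (rule up)
      also have "\<dots> \<le> dist y x / c" using Dtri[of y x] Dout[OF that] cpos by (simp add: divide_right_mono)
      also have "\<dots> \<le> M * dist x y" by (simp add: M_def dist_commute divide_inverse mult.commute[of "dist x y"] mult_right_mono)
      finally show ?thesis using out[OF that] nn by simp
    qed
    show ?thesis
    proof (cases "x \<in> \<Omega> \<and> y \<in> \<Omega>")
      case True
      then have "\<bar>\<delta> x - \<delta> y\<bar> \<le> L0 * dist x y" using L0 by blast
      also have "\<dots> \<le> M * dist x y" by (simp add: M_def mult_right_mono)
      finally show ?thesis .
    next
      case False
      then show ?thesis using half[of x y] half[of y x] by (auto simp: dist_commute abs_minus_commute)
    qed
  qed
  have "continuous_on UNIV \<delta>"
    apply (rule lipschitz_on_continuous_on[where L = M])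
    apply (rule lipschitz_onI)
    using glob L0 by (auto simp: M_def dist_real_def)
  then have meas_borel: "\<delta> \<in> borel_measurable borel" by (rule borel_measurable_continuous_onI)
  then have meas[measurable]: "\<delta> \<in> borel_measurable lborel" by simp
  obtain b where b: "\<forall>x\<in>\<Omega>. norm x \<le> b" using bdd by (auto simp: bounded_iff)
  define B where "B = (max b 0 + norm p) / c"
  have dB: "\<delta> x \<le> B" for x
  proof (cases "x \<in> \<Omega>")
    case True
    have "D x \<le> dist x p" unfolding D_def using p by (intro infdist_le) auto
    also have "\<dots> \<le> max b 0 + norm p" using b True norm_triangle_ineq4[of x p] by (auto simp: dist_norm)
    finally have "D x \<le> max b 0 + norm p" .
    then have "D x / c \<le> (max b 0 + norm p) / c" using cpos by (simp add: divide_right_mono)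
    then show ?thesis using up[of x] by (simp add: B_def)
  next
    case False
    then show ?thesis using out[of x] cpos by (simp add: B_def)
  qed
  have B0: "B \<ge> 0" using dB[of p] out[OF p] by simp
  have Omeas: "\<Omega> \<in> sets lborel" using opn by simp
  have Ofin: "emeasure lborel \<Omega> < \<infinity>" using bdd by (rule emeasure_bounded_finite)
  have L2: "integrable lborel (\<lambda>x. (\<delta> x powr s)\<^sup>2)"
  proof (rule Bochner_Integration.integrable_bound)
    show "integrable lborel (\<lambda>x. (B powr s)\<^sup>2 * indicator \<Omega> x)"
      using Ofin Omeas by (intro integrable_mult_right integrable_real_indicator) auto
    show "(\<lambda>x. (\<delta> x powr s)\<^sup>2) \<in> borel_measurable lborel" by measurable
    show "AE x in lborel. norm ((\<delta> x powr s)\<^sup>2) \<le> norm ((B powr s)\<^sup>2 * indicator \<Omega> x)"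
    proof (intro AE_I2)
      fix x
      show "norm ((\<delta> x powr s)\<^sup>2) \<le> norm ((B powr s)\<^sup>2 * indicator \<Omega> x)"
      proof (cases "x \<in> \<Omega>")
        case True
        have "\<delta> x powr s \<le> B powr s" using dB nn s by (intro powr_mono2) auto
        then show ?thesis using True nn[rule_format, of x] by (auto intro!: power_mono)
      next
        case False then show ?thesis using out by simp
      qed
    qed
  qed
  define g where "g = real DIM('a) + 2 * s"
  define F where "F x y = (\<delta> x powr s - \<delta> y powr s)\<^sup>2 / norm (x - y) powr g" for x y
  define H where "H x y = ennreal (if \<delta> y \<le> \<delta> x then F x y else 0)" for x y
  define K1 where "K1 = 2 powr g * 2^DIM('a) / (1 - 1 / 2 powr (2 - 2 * s))"
  define K2 where "K2 = 4^DIM('a) / (1 - 1 / 2 powr (2 * s))"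
  define K where "K = L0\<^sup>2 * C powr (2 - 2 * s) * K1 + (2 / c) powr (2 * s) * K2"
  have inner: "(\<integral>\<^sup>+ y. H x y \<partial>lborel) \<le> ennreal K" if xO: "x \<in> \<Omega>" for x
  proof -
    define r where "r = D x / 2"
    have r: "r > 0" using Dpos[OF xO] by (simp add: r_def)
    define A1 where "A1 = L0\<^sup>2 * (r / C) powr (2 * s - 2)"
    define A2 where "A2 = (\<delta> x powr s)\<^sup>2"
    have A1: "A1 \<ge> 0" by (simp add: A1_def)
    have A2: "A2 \<ge> 0" by (simp add: A2_def)
    define P1 where "P1 y = ennreal (if dist x y < r then A1 * (norm (x - y)^2 / norm (x - y) powr g) else 0)" for y
    define P2 where "P2 y = ennreal (if r \<le> dist x y then A2 / norm (x - y) powr g else 0)" for y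
    have pt: "H x y \<le> P1 y + P2 y" for y
    proof (cases "dist x y < r")
      case True
      have "D x \<le> D y + dist x y" by (rule Dtri)
      then have Dy: "D y > r" using True by (simp add: r_def)
      have yO: "y \<in> \<Omega>" using Din Dy r by auto
      define m where "m = r / C"
      have m: "m > 0" using r Cpos by (simp add: m_def)
      have mx: "m \<le> \<delta> x"
      proof -
        have "0 \<le> C * \<delta> x" using Cpos nn by simp
        then show ?thesis using cmp(2)[of x] Cpos by (simp add: m_def r_def field_simps)
      qed
      have my: "m \<le> \<delta> y" using lo[of y] Dy Cpos
        by (smt (verit, best) divide_right_mono m_def)
      have "\<bar>\<delta> x powr s - \<delta> y powr s\<bar> \<le> \<bar>\<delta> x - \<delta> y\<bar> * m powr (s - 1)"
        by (rule powr_diff_abs_le[OF m mx my s])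
      also have "\<dots> \<le> L0 * dist x y * m powr (s - 1)"
        by (rule mult_right_mono[OF L0(2)[OF xO yO]]) simp
      finally have "(\<delta> x powr s - \<delta> y powr s)\<^sup>2 \<le> (L0 * dist x y * m powr (s - 1))\<^sup>2"
        by (metis abs_ge_zero order_trans power2_abs power_mono)
      also have "\<dots> = A1 * (norm (x - y))\<^sup>2"
      proof -
        have mm: "(m powr (s - 1))^2 = m powr (2 * s - 2)"
          using m powr_power[of m "s - 1" 2] by (simp add: algebra_simps)
        have A1m: "A1 = L0\<^sup>2 * m powr (2 * s - 2)" by (simp add: A1_def m_def)
        show ?thesis unfolding A1m power_mult_distrib mm by (simp add: dist_norm algebra_simps)
      qed
      finally have "F x y \<le> A1 * (norm (x - y)^2 / norm (x - y) powr g)"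
        unfolding F_def by (metis divide_right_mono powr_ge_zero times_divide_eq_right)
      then have "H x y \<le> P1 y" using True A1 by (auto simp: H_def P1_def ennreal_leI)
      then show ?thesis by (simp add: add_increasing2)
    next
      case False
      have "F x y \<le> A2 / norm (x - y) powr g" if le: "\<delta> y \<le> \<delta> x"
      proof -
        have "0 \<le> \<delta> y powr s" "\<delta> y powr s \<le> \<delta> x powr s"
          using le nn s by (auto intro: powr_mono2)
        then have "(\<delta> x powr s - \<delta> y powr s)\<^sup>2 \<le> A2" unfolding A2_def
          by (intro power_mono) auto
        then show ?thesis unfolding F_def by (simp add: divide_right_mono)
      qed
      then have "H x y \<le> P2 y" using False A2 by (auto simp: H_def P2_def ennreal_leI)
      then show ?thesis by (simp add: add_increasing)
    qed
    have mP1: "P1 \<in> borel_measurable lborel" unfolding P1_def by measurable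
    have mP2: "P2 \<in> borel_measurable lborel" unfolding P2_def by measurable
    have "(\<integral>\<^sup>+ y. H x y \<partial>lborel) \<le> (\<integral>\<^sup>+ y. P1 y + P2 y \<partial>lborel)"
      by (rule nn_integral_mono) (rule pt)
    also have "\<dots> = (\<integral>\<^sup>+ y. P1 y \<partial>lborel) + (\<integral>\<^sup>+ y. P2 y \<partial>lborel)"
      by (rule nn_integral_add[OF mP1 mP2])
    also have "\<dots> \<le> ennreal (A1 * K1 * r powr (2 - 2 * s)) + ennreal (A2 * K2 * r powr (- (2 * s)))"
      apply (rule add_mono)
      unfolding P1_def P2_def K1_def K2_def g_def
      by (rule small_int[OF s r A1]) (rule large_int[OF s r A2])
    also have "\<dots> \<le> ennreal K"
    proof -
      have e1: "A1 * K1 * r powr (2 - 2 * s) = L0\<^sup>2 * C powr (2 - 2 * s) * K1"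
        using r Cpos by (simp add: A1_def powr_divide powr_minus[symmetric] powr_add[symmetric] powr_diff)
      have "1 < (2::real) powr (2 * s)" using s by (intro gr_one_powr) auto
      then have K2: "K2 \<ge> 0" by (simp add: K2_def)
      have dx: "0 < \<delta> x" "\<delta> x \<le> 2 * r / c"
      proof -
        have "0 < D x / C" using Dpos[OF xO] Cpos by simp
        then show "0 < \<delta> x" using lo[of x] by linarith
        show "\<delta> x \<le> 2 * r / c" using up[of x] by (simp add: r_def)
      qed
      have "A2 = \<delta> x powr (2 * s)"
        using dx by (simp add: A2_def powr_power)
      also have "\<dots> \<le> (2 * r / c) powr (2 * s)" using dx s by (intro powr_mono2) auto
      finally have "A2 * r powr (- (2 * s)) \<le> (2 * r / c) powr (2 * s) * r powr (- (2 * s))"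
        by (simp add: mult_right_mono)
      also have "\<dots> = (2 / c) powr (2 * s)"
        using r cpos by (simp add: powr_divide powr_mult powr_minus)
      finally have e2: "A2 * K2 * r powr (- (2 * s)) \<le> (2 / c) powr (2 * s) * K2"
        using K2 by (metis mult.commute mult.left_commute mult_left_mono)
      have "A1 * K1 * r powr (2 - 2 * s) \<ge> 0" "A2 * K2 * r powr (- (2 * s)) \<ge> 0"
      proof -
        have "1 < (2::real) powr (2 - 2 * s)" using s by (intro gr_one_powr) auto
        then have "K1 \<ge> 0" by (simp add: K1_def)
        then show "A1 * K1 * r powr (2 - 2 * s) \<ge> 0" "A2 * K2 * r powr (- (2 * s)) \<ge> 0"
          using A1 A2 K2 by auto
      qed
      then have "ennreal (A1 * K1 * r powr (2 - 2 * s)) + ennreal (A2 * K2 * r powr (- (2 * s)))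
          = ennreal (A1 * K1 * r powr (2 - 2 * s) + A2 * K2 * r powr (- (2 * s)))"
        by (simp add: ennreal_plus)
      also have "\<dots> \<le> ennreal K"
        using e1 e2 unfolding K_def by (intro ennreal_leI) linarith
      finally show ?thesis .
    qed
    finally show ?thesis .
  qed
  have Hout: "H x y = 0" if "x \<notin> \<Omega>" for x y
  proof -
    have "\<delta> x = 0" using out[OF that] .
    then show ?thesis using nn[rule_format, of y] by (auto simp: H_def F_def)
  qed
  have mH1: "(\<lambda>z. H (fst z) (snd z)) \<in> borel_measurable (lborel \<Otimes>\<^sub>M lborel)"
    unfolding H_def F_def by measurable
  have mH2: "(\<lambda>z. H (snd z) (fst z)) \<in> borel_measurable (lborel \<Otimes>\<^sub>M lborel)"
    unfolding H_def F_def by measurable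
  have int1: "(\<integral>\<^sup>+ z. H (fst z) (snd z) \<partial>(lborel \<Otimes>\<^sub>M lborel)) = (\<integral>\<^sup>+ x. \<integral>\<^sup>+ y. H x y \<partial>lborel \<partial>lborel)"
    using lborel.nn_integral_fst[OF mH1] by simp
  have int2: "(\<integral>\<^sup>+ z. H (snd z) (fst z) \<partial>(lborel \<Otimes>\<^sub>M lborel)) = (\<integral>\<^sup>+ x. \<integral>\<^sup>+ y. H x y \<partial>lborel \<partial>lborel)"
    using lborel_pair.nn_integral_snd[OF mH2] by simp
  have bnd: "(\<integral>\<^sup>+ x. \<integral>\<^sup>+ y. H x y \<partial>lborel \<partial>lborel) \<le> ennreal K * emeasure lborel \<Omega>"
  proof -
    have "(\<integral>\<^sup>+ x. \<integral>\<^sup>+ y. H x y \<partial>lborel \<partial>lborel) \<le> (\<integral>\<^sup>+ x. ennreal K * indicator \<Omega> x \<partial>lborel)"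
    proof (rule nn_integral_mono)
      fix x
      show "(\<integral>\<^sup>+ y. H x y \<partial>lborel) \<le> ennreal K * indicator \<Omega> x"
        using inner[of x] Hout[of x] by (cases "x \<in> \<Omega>") auto
    qed
    also have "\<dots> = ennreal K * emeasure lborel \<Omega>"
      using Omeas by (rule nn_integral_cmult_indicator)
    finally show ?thesis .
  qed
  have fin: "ennreal K * emeasure lborel \<Omega> < \<infinity>"
    using Ofin by (simp add: ennreal_mult_less_top)
  have "(\<integral>\<^sup>+ z. ennreal ((\<delta> (fst z) powr s - \<delta> (snd z) powr s)\<^sup>2 /
                   norm (fst z - snd z) powr (real DIM('a) + 2 * s)) \<partial>(lborel \<Otimes>\<^sub>M lborel))
     \<le> (\<integral>\<^sup>+ z. H (fst z) (snd z) + H (snd z) (fst z) \<partial>(lborel \<Otimes>\<^sub>M lborel))"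
  proof (rule nn_integral_mono)
    fix z :: "'a \<times> 'a"
    obtain x y where z: "z = (x, y)" by (cases z)
    have sym: "F y x = F x y"
      by (simp add: F_def norm_minus_commute power2_commute)
    show "ennreal ((\<delta> (fst z) powr s - \<delta> (snd z) powr s)\<^sup>2 /
                   norm (fst z - snd z) powr (real DIM('a) + 2 * s)) \<le> H (fst z) (snd z) + H (snd z) (fst z)"
    proof (cases "\<delta> y \<le> \<delta> x")
      case True
      then show ?thesis by (simp add: z H_def F_def g_def add_increasing2)
    next
      case False
      then have "H y x = ennreal (F x y)" using sym by (simp add: H_def)
      then show ?thesis by (simp add: z F_def g_def add_increasing)
    qed
  qed
  also have "\<dots> = (\<integral>\<^sup>+ z. H (fst z) (snd z) \<partial>(lborel \<Otimes>\<^sub>M lborel)) + (\<integral>\<^sup>+ z. H (snd z) (fst z) \<partial>(lborel \<Otimes>\<^sub>M lborel))"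
    by (rule nn_integral_add[OF mH1 mH2])
  also have "\<dots> \<le> ennreal K * emeasure lborel \<Omega> + ennreal K * emeasure lborel \<Omega>"
    unfolding int1 int2 by (intro add_mono bnd)
  also have "\<dots> < \<infinity>" using fin by (simp add: ennreal_add_less_top)
  finally have fin2: "(\<integral>\<^sup>+ z. ennreal ((\<delta> (fst z) powr s - \<delta> (snd z) powr s)\<^sup>2 /
                   norm (fst z - snd z) powr (real DIM('a) + 2 * s)) \<partial>(lborel \<Otimes>\<^sub>M lborel)) < \<infinity>" .
  have mu: "(\<lambda>x. \<delta> x powr s) \<in> borel_measurable lborel" by measurable
  show "(\<lambda>x. \<delta> x powr s) \<in> Hs s"
    unfolding Hs_def using mu L2 fin2 by simp
qed

end
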